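(* Fix $\lambda\ge 0$ and let $V(\cdot;\lambda):\mathcal{A}\times\mathcal{H}\to\mathbb{R}$ be such that, for every $h\in\mathcal{H}$, $V((A_l,A_r),h;\lambda)$ is non-decreasing in $A_l$ and in $A_r$ (e.g. a solution of the Bellman equation with this property). Define $J$ and $\Delta J_{\mathbf{w},\mathbf{w}'}$ from this $V$. Then for every $h\in\mathcal{H}$: (A) $\Delta J_{(0,0),(1,0)}(\mathbf{A},h;\lambda)$ is non-decreasing in $A_l$ (for fixed $A_r$), and $\Delta J_{(0,0),\mathbf{w}'}(\mathbf{A},h;\lambda)$ is non-decreasing in $A_r$ (for fixed $A_l$) for $\mathbf{w}'\in\{(0,1),(1,1)\}$; (B) for $\mathbf{w}\in\{(0,1),(1,1)\}$ and every $\mathbf{w}'\in\mathcal{W}$ with $\mathbf{w}'\ne\mathbf{w}$, $\Delta J_{\mathbf{w},\mathbf{w}'}(\mathbf{A},h;\lambda)$ is non-increasing in $A_r$ (for fixed $A_l$); (C) for every $\mathbf{w}'\in\mathcal{W}$ with $\mathbf{w}'\ne(1,0)$, $\Delta J_{(1,0),\mathbf{w}'}(\mathbf{A},h;\lambda)$ is non-increasing in $A_l$ (for fixed $A_r$).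
   Context: Single IoT device model. Fix integers $\hat A_l,\hat A_r\ge 1$ and let $\mathcal{A}_l=\{1,\dots,\hat A_l\}$, $\mathcal{A}_r=\{1,\dots,\hat A_r\}$, $\mathcal{A}=\mathcal{A}_l\times\mathcal{A}_r$, with elements $\mathbf{A}=(A_l,A_r)$. Let $\mathcal{H}\subset(0,\infty)$ be a finite set of channel states with probability mass function $p_{\mathcal{H}}$. The action set is $\mathcal{W}=\{0,1\}\times\{0,1\}$, with actions $\mathbf{w}=(s,u)$. Let $C_s\ge 0$ and $C_u:\mathcal{H}\to[0,\infty)$ decreasing; the energy cost is $C(\mathbf{w},h)=sC_s+uC_u(h)$. Under action $\mathbf{w}=(s,u)$ at AoI state $\mathbf{A}=(A_l,A_r)$, the next AoI state $\mathbf{A}'=(A_l',A_r')$ is $A_l'=1$ if $s=1$ and $A_l'=\min\{A_l+1,\hat A_l\}$ if $s=0$; $A_r'=\min\{A_l+1,\hat A_r\}$ if $u=1$ and $A_r'=\min\{A_r+1,\hat A_r\}$ if $u=0$. The Lagrange cost is $L(\mathbf{A},h,\mathbf{w};\lambda)=A_r+\lambda C(\mathbf{w},h)$. Given $V$, the state-action Lagrange cost is $J(\mathbf{A},h,\mathbf{w};\lambda)=L(\mathbf{A},h,\mathbf{w};\lambda)+\sum_{h'\in\mathcal{H}}p_{\mathcal{H}}(h')V(\mathbf{A}',h';\lambda)$ with $\mathbf{A}'$ the next AoI state under $\mathbf{w}$, and $\Delta J_{\mathbf{w},\mathbf{w}'}(\mathbf{A},h;\lambda)=J(\mathbf{A},h,\mathbf{w};\lambda)-J(\mathbf{A},h,\mathbf{w}';\lambda)$.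 *)

theory Defs
  imports Complex_Main
begin

text \<open>The Lagrange multiplier lambda is fixed, so V and J
do not carry it as an explicit argument dependence beyond the parameter lam.\<close>

definition AoI_set :: "nat \<Rightarrow> nat \<Rightarrow> (nat \<times> nat) set" where
  "AoI_set Alh Arh = {1..Alh} \<times> {1..Arh}"

definition W_set :: "(nat \<times> nat) set" where
  "W_set = {0,1} \<times> {0,1}"

definition next_AoI :: "nat \<Rightarrow> nat \<Rightarrow> nat \<times> nat \<Rightarrow> nat \<times> nat \<Rightarrow> nat \<times> nat" where
  "next_AoI Alh Arh A w =
     (let (Al, Ar) = A; (s, u) = w in
       (if s = 1 then 1 else min (Al + 1) Alh,
        if u = 1 then min (Al + 1) Arh else min (Ar + 1) Arh))"

definition energy_cost :: "real \<Rightarrow> (real \<Rightarrow> real) \<Rightarrow> nat \<times> nat \<Rightarrow> real \<Rightarrow> real" where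
  "energy_cost Cs Cu w h = real (fst w) * Cs + real (snd w) * Cu h"

definition lagrange_cost ::
  "real \<Rightarrow> (real \<Rightarrow> real) \<Rightarrow> nat \<times> nat \<Rightarrow> real \<Rightarrow> nat \<times> nat \<Rightarrow> real \<Rightarrow> real" where
  "lagrange_cost Cs Cu A h w lam = real (snd A) + lam * energy_cost Cs Cu w h"

definition J_cost ::
  "nat \<Rightarrow> nat \<Rightarrow> real set \<Rightarrow> (real \<Rightarrow> real) \<Rightarrow> real \<Rightarrow> (real \<Rightarrow> real)
   \<Rightarrow> (nat \<times> nat \<Rightarrow> real \<Rightarrow> real) \<Rightarrow> nat \<times> nat \<Rightarrow> real \<Rightarrow> nat \<times> nat \<Rightarrow> real \<Rightarrow> real" where
  "J_cost Alh Arh H p Cs Cu V A h w lam =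
     lagrange_cost Cs Cu A h w lam + (\<Sum>h'\<in>H. p h' * V (next_AoI Alh Arh A w) h')"

definition DeltaJ ::
  "nat \<Rightarrow> nat \<Rightarrow> real set \<Rightarrow> (real \<Rightarrow> real) \<Rightarrow> real \<Rightarrow> (real \<Rightarrow> real)
   \<Rightarrow> (nat \<times> nat \<Rightarrow> real \<Rightarrow> real) \<Rightarrow> nat \<times> nat \<Rightarrow> nat \<times> nat \<Rightarrow> nat \<times> nat \<Rightarrow> real \<Rightarrow> real \<Rightarrow> real" where
  "DeltaJ Alh Arh H p Cs Cu V w w' A h lam =
     J_cost Alh Arh H p Cs Cu V A h w lam - J_cost Alh Arh H p Cs Cu V A h w' lam"

end

theory Submission
  imports Defs
begin

theorem lemma4:
  fixes Alh Arh :: nat and H :: "real set" and p :: "real \<Rightarrow> real"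
    and Cs :: real and Cu :: "real \<Rightarrow> real" and lam :: real
    and V :: "nat \<times> nat \<Rightarrow> real \<Rightarrow> real"
  assumes "Alh \<ge> 1" and "Arh \<ge> 1"
    and "finite H" and "H \<subseteq> {0<..}"
    and "\<forall>h\<in>H. p h \<ge> 0" and "(\<Sum>h\<in>H. p h) = 1"
    and "Cs \<ge> 0"
    and "\<forall>h\<in>H. Cu h \<ge> 0"
    and "\<forall>h\<in>H. \<forall>h'\<in>H. h \<le> h' \<longrightarrow> Cu h' \<le> Cu h"
    and "lam \<ge> 0"
    and V_mono_l: "\<forall>h\<in>H. \<forall>Al\<in>{1..Alh}. \<forall>Al'\<in>{1..Alh}. \<forall>Ar\<in>{1..Arh}.
                     Al \<le> Al' \<longrightarrow> V (Al, Ar) h \<le> V (Al', Ar) h"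
    and V_mono_r: "\<forall>h\<in>H. \<forall>Al\<in>{1..Alh}. \<forall>Ar\<in>{1..Arh}. \<forall>Ar'\<in>{1..Arh}.
                     Ar \<le> Ar' \<longrightarrow> V (Al, Ar) h \<le> V (Al, Ar') h"
  shows "\<forall>h\<in>H.
    \<comment> \<open>(A)\<close>
    (\<forall>Al\<in>{1..Alh}. \<forall>Al'\<in>{1..Alh}. \<forall>Ar\<in>{1..Arh}. Al \<le> Al' \<longrightarrow>
        DeltaJ Alh Arh H p Cs Cu V (0,0) (1,0) (Al, Ar) h lam
          \<le> DeltaJ Alh Arh H p Cs Cu V (0,0) (1,0) (Al', Ar) h lam) \<and>
    (\<forall>w'\<in>{(0,1),(1,1)}. \<forall>Al\<in>{1..Alh}. \<forall>Ar\<in>{1..Arh}. \<forall>Ar'\<in>{1..Arh}. Ar \<le> Ar' \<longrightarrow>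
        DeltaJ Alh Arh H p Cs Cu V (0,0) w' (Al, Ar) h lam
          \<le> DeltaJ Alh Arh H p Cs Cu V (0,0) w' (Al, Ar') h lam) \<and>
    \<comment> \<open>(B)\<close>
    (\<forall>w\<in>{(0,1),(1,1)}. \<forall>w'\<in>W_set. w' \<noteq> w \<longrightarrow>
      (\<forall>Al\<in>{1..Alh}. \<forall>Ar\<in>{1..Arh}. \<forall>Ar'\<in>{1..Arh}. Ar \<le> Ar' \<longrightarrow>
        DeltaJ Alh Arh H p Cs Cu V w w' (Al, Ar') h lam
          \<le> DeltaJ Alh Arh H p Cs Cu V w w' (Al, Ar) h lam)) \<and>
    \<comment> \<open>(C)\<close>
    (\<forall>w'\<in>W_set. w' \<noteq> (1,0) \<longrightarrow>
      (\<forall>Al\<in>{1..Alh}. \<forall>Al'\<in>{1..Alh}. \<forall>Ar\<in>{1..Arh}. Al \<le> Al' \<longrightarrow>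
        DeltaJ Alh Arh H p Cs Cu V (1,0) w' (Al', Ar) h lam
          \<le> DeltaJ Alh Arh H p Cs Cu V (1,0) w' (Al, Ar) h lam))"
proof -
  define S where "S X = (\<Sum>h'\<in>H. p h' * V X h')" for X
  have Smono: "S (a,b) \<le> S (a',b')" if "a \<le> a'" "b \<le> b'" "1 \<le> a" "a' \<le> Alh" "1 \<le> b" "b' \<le> Arh"
    for a b a' b'
    unfolding S_def
  proof (rule sum_mono)
    fix h' assume h': "h' \<in> H"
    have "V (a,b) h' \<le> V (a',b) h'" using V_mono_l h' that by auto
    also have "\<dots> \<le> V (a',b') h'" using V_mono_r h' that by auto
    finally show "p h' * V (a, b) h' \<le> p h' * V (a', b') h'"
      using assms(5) h' by (simp add: mult_left_mono)
  qed
  have D: "DeltaJ Alh Arh H p Cs Cu V w w' A h lam =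
     lam * (energy_cost Cs Cu w h - energy_cost Cs Cu w' h)
      + S (next_AoI Alh Arh A w) - S (next_AoI Alh Arh A w')" for w w' A h
    unfolding DeltaJ_def J_cost_def lagrange_cost_def S_def by (simp add: algebra_simps)
  have N: "next_AoI Alh Arh (Al, Ar) (s, u) =
       (if s = 1 then 1 else min (Al + 1) Alh,
        if u = 1 then min (Al + 1) Arh else min (Ar + 1) Arh)" for Al Ar s u
    unfolding next_AoI_def by simp
  note ab = assms(1,2)
  show ?thesis
    unfolding D N W_set_def
    apply (intro ballI conjI impI)
    using ab
    apply (auto simp: N intro!: Smono)
    done
qed

end
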